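(* Let $\Gamma$ be the triangle graph (three vertices, three edges $e_1,e_2,e_3$, pairwise joining the vertices) with constant magnetic field, i.e. vertex weight $\omega\equiv 1$ on each vertex, so that its $\mathbf{V}$-polynomial is $$x_1^3+(t_{e_1}+t_{e_2}+t_{e_3})x_2x_1+(t_{e_1}t_{e_2}+t_{e_2}t_{e_3}+t_{e_1}t_{e_3}+t_{e_1}t_{e_2}t_{e_3})x_3$$ in the variables $x_1,x_2,x_3,t_{e_1},t_{e_2},t_{e_3}$. Then the affine hypersurface in $\mathbb{A}^6$ defined by the vanishing of this polynomial is not polynomially countable.
   Context: For a graph $\Gamma$ with vertex weight $\omega:V(\Gamma)\to S$, the $\mathbf{V}$-polynomial is $\mathbf{V}_\Gamma(t,x)=\sum_{A\subseteq E(\Gamma)}\prod_{j}x_{s_j}\prod_{e\in A}t_e$, where the product over $j$ runs over the connected components of the spanning subgraph with edge set $A$ and $s_j$ is the sum of the weights of the vertices of the $j$-th component. A hypersurface defined by a polynomial with integer coefficients is polynomially countable if for every prime $p$ and every power $q=p^r$, the number $N(q)$ of its $\mathbb{F}_q$-points (solutions in $\mathbb{F}_q$ of the reduced equation) is given by a polynomial in $q$ with integer coefficients. *)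

theory Defs
  imports "HOL-Algebra.Ring" "HOL-Computational_Algebra.Polynomial"
begin

definition V_triangle :: "('a, 'b) ring_scheme \<Rightarrow> 'a \<Rightarrow> 'a \<Rightarrow> 'a \<Rightarrow> 'a \<Rightarrow> 'a \<Rightarrow> 'a \<Rightarrow> 'a" where
  "V_triangle R x1 x2 x3 t1 t2 t3 =
     (x1 [^]\<^bsub>R\<^esub> (3::nat))
     \<oplus>\<^bsub>R\<^esub> ((t1 \<oplus>\<^bsub>R\<^esub> t2 \<oplus>\<^bsub>R\<^esub> t3) \<otimes>\<^bsub>R\<^esub> x2 \<otimes>\<^bsub>R\<^esub> x1)
     \<oplus>\<^bsub>R\<^esub> (((t1 \<otimes>\<^bsub>R\<^esub> t2) \<oplus>\<^bsub>R\<^esub> (t2 \<otimes>\<^bsub>R\<^esub> t3) \<oplus>\<^bsub>R\<^esub> (t1 \<otimes>\<^bsub>R\<^esub> t3)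
            \<oplus>\<^bsub>R\<^esub> (t1 \<otimes>\<^bsub>R\<^esub> t2 \<otimes>\<^bsub>R\<^esub> t3)) \<otimes>\<^bsub>R\<^esub> x3)"

definition V_triangle_points :: "('a, 'b) ring_scheme \<Rightarrow> nat" where
  "V_triangle_points R = card {(x1, x2, x3, t1, t2, t3).
      x1 \<in> carrier R \<and> x2 \<in> carrier R \<and> x3 \<in> carrier R \<and>
      t1 \<in> carrier R \<and> t2 \<in> carrier R \<and> t3 \<in> carrier R \<and>
      V_triangle R x1 x2 x3 t1 t2 t3 = \<zero>\<^bsub>R\<^esub>}"

text \<open>Every finite field is isomorphic to one
  with carrier a set of naturals, so quantifying over fields of type nat ring covers
  all finite fields F_q (q any prime power).\<close>
definition V_triangle_polynomially_countable :: bool where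
  "V_triangle_polynomially_countable \<longleftrightarrow>
     (\<exists>f :: int poly. \<forall>R :: nat ring. field R \<and> finite (carrier R) \<longrightarrow>
        int (V_triangle_points R) = poly f (int (card (carrier R))))"

end

theory Submission
  imports Defs "HOL-Number_Theory.Cong"
begin

definition Zp :: "nat \<Rightarrow> nat ring" where
  "Zp p = \<lparr>carrier = {..<p}, monoid.mult = (\<lambda>a b. a * b mod p), one = 1,
           zero = 0, add = (\<lambda>a b. (a + b) mod p)\<rparr>"

lemma Zp_simps[simp]: "carrier (Zp p) = {..<p}" "a \<otimes>\<^bsub>Zp p\<^esub> b = a * b mod p"
  "\<one>\<^bsub>Zp p\<^esub> = 1" "\<zero>\<^bsub>Zp p\<^esub> = 0" "a \<oplus>\<^bsub>Zp p\<^esub> b = (a + b) mod p"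
  by (simp_all add: Zp_def)

lemma Zp_cring: assumes "p > 1" shows "cring (Zp p)"
proof (rule cringI)
  show "abelian_group (Zp p)"
  proof (rule abelian_groupI)
    fix x assume x: "x \<in> carrier (Zp p)"
    show "\<exists>y\<in>carrier (Zp p). y \<oplus>\<^bsub>Zp p\<^esub> x = \<zero>\<^bsub>Zp p\<^esub>"
    proof (cases "x = 0")
      case True then show ?thesis using assms by (intro bexI[of _ 0]) auto
    next
      case False then show ?thesis using x by (intro bexI[of _ "p - x"]) auto
    qed
  qed (use assms in \<open>auto simp: mod_add_eq add_ac mod_add_right_eq mod_add_left_eq\<close>)
  show "comm_monoid (Zp p)"
    by (rule comm_monoidI) (use assms in \<open>auto simp: mod_mult_left_eq mod_mult_right_eq mult_ac\<close>)
  fix x y z assume "x \<in> carrier (Zp p)" "y \<in> carrier (Zp p)" "z \<in> carrier (Zp p)"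
  show "(x \<oplus>\<^bsub>Zp p\<^esub> y) \<otimes>\<^bsub>Zp p\<^esub> z = x \<otimes>\<^bsub>Zp p\<^esub> z \<oplus>\<^bsub>Zp p\<^esub> y \<otimes>\<^bsub>Zp p\<^esub> z"
    by (simp add: mod_mult_left_eq mod_add_eq distrib_right)
qed

lemma Zp_field: assumes "prime p" shows "field (Zp p)"
proof -
  have p1: "p > 1" using assms prime_gt_1_nat by blast
  interpret cring "Zp p" using Zp_cring[OF p1] .
  show ?thesis
  proof (rule cring_fieldI2)
    show "\<zero>\<^bsub>Zp p\<^esub> \<noteq> \<one>\<^bsub>Zp p\<^esub>" by simp
    fix a assume a: "a \<in> carrier (Zp p)" "a \<noteq> \<zero>\<^bsub>Zp p\<^esub>"
    then have "coprime a p" using assms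
      by (metis Zp_simps(1) Zp_simps(4) coprime_commute lessThan_iff nat_dvd_not_less
          neq0_conv prime_imp_coprime)
    then obtain x where "[a * x = Suc 0] (mod p)" using cong_solve_coprime_nat by blast
    then have "a * (x mod p) mod p = 1" using p1
      by (simp add: cong_def mod_mult_right_eq)
    then show "\<exists>b\<in>carrier (Zp p). a \<otimes>\<^bsub>Zp p\<^esub> b = \<one>\<^bsub>Zp p\<^esub>"
      using p1 by (intro bexI[of _ "x mod p"]) auto
  qed
qed

locale fin_field = field + assumes fin: "finite (carrier R)"
begin

definition Fib where
  "Fib s c = {(x1, x2, x3). x1 \<in> carrier R \<and> x2 \<in> carrier R \<and> x3 \<in> carrier R \<and>
      (x1 [^] (3::nat)) \<oplus> (s \<otimes> x2 \<otimes> x1) \<oplus> (c \<otimes> x3) = \<zero>}"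

lemma pow3: "x \<in> carrier R \<Longrightarrow> x [^] (3::nat) = x \<otimes> x \<otimes> x"
  by (simp add: numeral_3_eq_3)

lemma eqa: assumes "y \<in> carrier R" "x \<in> carrier R" "c \<in> carrier R" "c \<noteq> \<zero>"
  shows "(y \<oplus> c \<otimes> x = \<zero>) = (x = \<ominus> (inv c \<otimes> y))"
proof -
  have cU: "c \<in> Units R" using assms field_Units by auto
  have ic: "inv c \<in> carrier R" "inv c \<otimes> c = \<one>" "c \<otimes> inv c = \<one>" using cU by auto
  show ?thesis
  proof
    assume h: "y \<oplus> c \<otimes> x = \<zero>"
    have "c \<otimes> x \<oplus> y = \<zero>" using h assms by (simp add: a_comm)
    hence 1: "\<ominus> y = c \<otimes> x" by (rule minus_equality) (simp_all add: assms)
    have "x = inv c \<otimes> (c \<otimes> x)" using assms ic by (simp add: m_assoc[symmetric])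
    also have "\<dots> = inv c \<otimes> \<ominus> y" using 1 by simp
    also have "\<dots> = \<ominus> (inv c \<otimes> y)" using ic assms by (simp add: r_minus)
    finally show "x = \<ominus> (inv c \<otimes> y)" .
  next
    assume h: "x = \<ominus> (inv c \<otimes> y)"
    have "c \<otimes> x = \<ominus> (c \<otimes> (inv c \<otimes> y))" using h ic assms by (simp add: r_minus)
    also have "c \<otimes> (inv c \<otimes> y) = y" using ic assms by (simp add: m_assoc[symmetric])
    finally show "y \<oplus> c \<otimes> x = \<zero>" using assms by (simp add: r_neg)
  qed
qed

lemma card_Fib_a: assumes "s \<in> carrier R" "c \<in> carrier R" "c \<noteq> \<zero>"
  shows "card (Fib s c) = card (carrier R) ^ 2"
proof -
  let ?g = "\<lambda>(x1, x2). (x1, x2, \<ominus> (inv c \<otimes> (x1 [^] (3::nat) \<oplus> s \<otimes> x2 \<otimes> x1)))"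
  have ic: "inv c \<in> carrier R" using assms field_Units by auto
  have "Fib s c = ?g ` (carrier R \<times> carrier R)"
  proof (intro Set.set_eqI iffI)
    fix z assume "z \<in> Fib s c"
    then obtain x1 x2 x3 where z: "z = (x1, x2, x3)" "x1 \<in> carrier R" "x2 \<in> carrier R"
      "x3 \<in> carrier R" "(x1 [^] (3::nat)) \<oplus> (s \<otimes> x2 \<otimes> x1) \<oplus> (c \<otimes> x3) = \<zero>"
      unfolding Fib_def by auto
    then have "x3 = \<ominus> (inv c \<otimes> (x1 [^] (3::nat) \<oplus> s \<otimes> x2 \<otimes> x1))"
      using eqa[of "x1 [^] (3::nat) \<oplus> s \<otimes> x2 \<otimes> x1" x3 c] assms by auto
    then show "z \<in> ?g ` (carrier R \<times> carrier R)" using z by force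
  next
    fix z assume "z \<in> ?g ` (carrier R \<times> carrier R)"
    then obtain x1 x2 where z: "z = ?g (x1, x2)" "x1 \<in> carrier R" "x2 \<in> carrier R" by auto
    then show "z \<in> Fib s c" unfolding Fib_def using eqa[of "x1 [^] (3::nat) \<oplus> s \<otimes> x2 \<otimes> x1" _ c] assms ic
      by auto
  qed
  moreover have "inj_on ?g (carrier R \<times> carrier R)" by (auto simp: inj_on_def)
  ultimately show ?thesis by (simp add: card_image card_cartesian_product power2_eq_square)
qed

lemma prod0: "a \<in> carrier R \<Longrightarrow> b \<in> carrier R \<Longrightarrow> (a \<otimes> b = \<zero>) = (a = \<zero> \<or> b = \<zero>)"
  using integral_iff by blast

lemma card_Fib_c: assumes "s = \<zero>" "c = \<zero>"
  shows "card (Fib s c) = card (carrier R) ^ 2"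
proof -
  have "Fib s c = {\<zero>} \<times> carrier R \<times> carrier R"
    unfolding Fib_def using assms by (auto simp: pow3 prod0)
  then show ?thesis by (simp add: card_cartesian_product power2_eq_square)
qed

lemma card_Fib_b: assumes "s \<in> carrier R" "s \<noteq> \<zero>" "c = \<zero>"
  shows "card (Fib s c) = card (carrier R) ^ 2 + (card (carrier R) - 1) * card (carrier R)"
proof -
  let ?g = "\<lambda>(x1, x3). (x1, \<ominus> (inv s \<otimes> (x1 \<otimes> x1)), x3)"
  have is': "inv s \<in> carrier R" "inv s \<otimes> s = \<one>" using assms field_Units by auto
  have key: "(x1 [^] (3::nat) \<oplus> s \<otimes> x2 \<otimes> x1 \<oplus> c \<otimes> x3 = \<zero>) =
     (x1 = \<zero> \<or> x2 = \<ominus> (inv s \<otimes> (x1 \<otimes> x1)))"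
    if "x1 \<in> carrier R" "x2 \<in> carrier R" "x3 \<in> carrier R" for x1 x2 x3
  proof -
    have "x1 [^] (3::nat) \<oplus> s \<otimes> x2 \<otimes> x1 \<oplus> c \<otimes> x3 = x1 \<otimes> (x1 \<otimes> x1 \<oplus> s \<otimes> x2)"
      using that assms by (simp add: pow3) algebra
    then show ?thesis using that assms eqa[of "x1 \<otimes> x1" x2 s] by (simp add: prod0)
  qed
  have "Fib s c = ({\<zero>} \<times> carrier R \<times> carrier R) \<union> ?g ` ((carrier R - {\<zero>}) \<times> carrier R)"
    unfolding Fib_def using key is' by auto
  moreover have "inj_on ?g ((carrier R - {\<zero>}) \<times> carrier R)" by (auto simp: inj_on_def)
  moreover have "({\<zero>} \<times> carrier R \<times> carrier R) \<inter> ?g ` ((carrier R - {\<zero>}) \<times> carrier R) = {}" by auto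
  ultimately have "card (Fib s c) = card ({\<zero>} \<times> carrier R \<times> carrier R) + card ((carrier R - {\<zero>}) \<times> carrier R)"
    using fin by (simp add: card_Un_disjoint card_image)
  then show ?thesis using fin by (simp add: card_cartesian_product power2_eq_square)
qed

definition sf where "sf t = (case t of (t1, t2, t3) \<Rightarrow> t1 \<oplus> t2 \<oplus> t3)"
definition cf where "cf t = (case t of (t1, t2, t3) \<Rightarrow>
   (t1 \<otimes> t2) \<oplus> (t2 \<otimes> t3) \<oplus> (t1 \<otimes> t3) \<oplus> (t1 \<otimes> t2 \<otimes> t3))"

definition Bset where "Bset = {(t1, t2, t3). t1 \<in> carrier R \<and> t2 \<in> carrier R \<and> t3 \<in> carrier R \<and>
   (t1 \<otimes> t2) \<oplus> (t2 \<otimes> t3) \<oplus> (t1 \<otimes> t3) \<oplus> (t1 \<otimes> t2 \<otimes> t3) = \<zero> \<and>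
   t1 \<oplus> t2 \<oplus> t3 \<noteq> \<zero>}"

lemma card_Fib_gen: assumes "t \<in> carrier R \<times> carrier R \<times> carrier R"
  shows "card (Fib (sf t) (cf t)) = card (carrier R) ^ 2 +
     (if t \<in> Bset then (card (carrier R) - 1) * card (carrier R) else 0)"
proof -
  obtain t1 t2 t3 where t: "t = (t1, t2, t3)" "t1 \<in> carrier R" "t2 \<in> carrier R" "t3 \<in> carrier R"
    using assms by auto
  have sc: "sf t \<in> carrier R" "cf t \<in> carrier R" using t by (simp_all add: sf_def cf_def)
  have B: "(t \<in> Bset) = (cf t = \<zero> \<and> sf t \<noteq> \<zero>)" using t by (simp add: Bset_def sf_def cf_def)
  show ?thesis
  proof (cases "cf t = \<zero>")
    case False then show ?thesis using card_Fib_a[OF sc] B by simp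
  next
    case True
    show ?thesis
    proof (cases "sf t = \<zero>")
      case True2: True
      then show ?thesis using card_Fib_c[OF True2 True] B by simp
    next
      case False
      then show ?thesis using card_Fib_b[OF sc(1) False True] B True by simp
    qed
  qed
qed

lemma points: "V_triangle_points R = card (carrier R) ^ 5 + card Bset * ((card (carrier R) - 1) * card (carrier R))"
proof -
  let ?T = "carrier R \<times> carrier R \<times> carrier R"
  let ?h = "\<lambda>((t1, t2, t3), (x1, x2, x3)). (x1, x2, x3, t1, t2, t3)"
  let ?q = "card (carrier R)"
  have "{(x1, x2, x3, t1, t2, t3).
      x1 \<in> carrier R \<and> x2 \<in> carrier R \<and> x3 \<in> carrier R \<and>
      t1 \<in> carrier R \<and> t2 \<in> carrier R \<and> t3 \<in> carrier R \<and>
      V_triangle R x1 x2 x3 t1 t2 t3 = \<zero>} = ?h ` (SIGMA t:?T. Fib (sf t) (cf t))"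
    by (auto simp: V_triangle_def Fib_def sf_def cf_def image_iff)
  moreover have "inj_on ?h (SIGMA t:?T. Fib (sf t) (cf t))" by (auto simp: inj_on_def)
  moreover have "finite (Fib (sf t) (cf t))" for t
    by (rule finite_subset[of _ "carrier R \<times> carrier R \<times> carrier R"]) (auto simp: Fib_def fin)
  ultimately have "V_triangle_points R = (\<Sum>t\<in>?T. card (Fib (sf t) (cf t)))"
    unfolding V_triangle_points_def using fin by (simp add: card_image)
  also have "\<dots> = (\<Sum>t\<in>?T. ?q ^ 2 + (if t \<in> Bset then (?q - 1) * ?q else 0))"
    by (rule sum.cong) (auto simp: card_Fib_gen)
  also have "\<dots> = ?q ^ 2 * card ?T + card (?T \<inter> Bset) * ((?q - 1) * ?q)"
    using fin by (simp add: sum.distrib sum.If_cases)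
  also have "?T \<inter> Bset = Bset" by (auto simp: Bset_def)
  finally show ?thesis using fin by (simp add: card_cartesian_product power_numeral_reduce eval_nat_numeral)
qed

end
lemma Zp_fin: "prime p \<Longrightarrow> fin_field (Zp p)"
  by (intro fin_field.intro Zp_field fin_field_axioms.intro) auto

lemma B7: "card (fin_field.Bset (Zp 7)) = 46"
proof -
  have "fin_field.Bset (Zp 7) = Set.filter (\<lambda>(t1, t2, t3).
     (((t1 * t2 mod 7 + t2 * t3 mod 7) mod 7 + t1 * t3 mod 7) mod 7 + (t1 * t2 mod 7) * t3 mod 7) mod 7 = 0 \<and>
     ((t1 + t2) mod 7 + t3) mod 7 \<noteq> 0) (set [0..<7] \<times> set [0..<7] \<times> set [0..<7])"
    unfolding fin_field.Bset_def[OF Zp_fin[of 7, simplified]] by auto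
  also have "card \<dots> = 46" by code_simp
  finally show ?thesis .
qed


lemma B2: "card (fin_field.Bset (Zp 2)) = 4"
proof -
  have "fin_field.Bset (Zp 2) = Set.filter (\<lambda>(t1, t2, t3).
     (((t1 * t2 mod 2 + t2 * t3 mod 2) mod 2 + t1 * t3 mod 2) mod 2 + (t1 * t2 mod 2) * t3 mod 2) mod 2 = 0 \<and>
     ((t1 + t2) mod 2 + t3) mod 2 \<noteq> 0) (set [0..<2] \<times> set [0..<2] \<times> set [0..<2])"
    unfolding fin_field.Bset_def[OF Zp_fin[of 2, simplified]] by auto
  also have "card \<dots> = 4" by code_simp
  finally show ?thesis .
qed


lemma poly_diff_dvd: "(x - y) dvd (poly (f :: int poly) x - poly f y)"
proof -
  have "poly (f - [:poly f y:]) y = 0" by simp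
  then obtain g where g: "f - [:poly f y:] = [:-y, 1:] * g"
    using poly_eq_0_iff_dvd by (metis dvdE)
  have "poly (f - [:poly f y:]) x = (x - y) * poly g x" by (simp add: g algebra_simps)
  then show ?thesis by simp
qed

lemma N7: "V_triangle_points (Zp 7) = 18739"
  using fin_field.points[OF Zp_fin[of 7, simplified]] B7 by simp

lemma N2: "V_triangle_points (Zp 2) = 40"
  using fin_field.points[OF Zp_fin[of 2, simplified]] B2 by simp

theorem theorem3p2:
  shows "\<not> V_triangle_polynomially_countable"
proof
  assume "V_triangle_polynomially_countable"
  then obtain f :: "int poly" where f: "\<And>R :: nat ring. field R \<and> finite (carrier R) \<Longrightarrow>
        int (V_triangle_points R) = poly f (int (card (carrier R)))"
    unfolding V_triangle_polynomially_countable_def by blast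
  have "prime (7::nat)" "prime (2::nat)" by simp_all
  then have "int (V_triangle_points (Zp 7)) = poly f 7" "int (V_triangle_points (Zp 2)) = poly f 2"
    using f[of "Zp 7"] f[of "Zp 2"] Zp_field by auto
  then have "poly f 7 = 18739" "poly f 2 = 40" using N7 N2 by simp_all
  moreover have "(7 - 2) dvd (poly f 7 - poly f 2)" by (rule poly_diff_dvd)
  ultimately show False by simp
qed

end
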